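(* Let $c,d>0$ with $cd\le1$ and $g(x)=xF(c,d;c+d;x)$ for $x\in(0,1)$. Then for all $s,p,q>0$, $$g\!\left(\frac{s^p}{1+s^p}\right)+g\!\left(\frac{s^q}{1+s^q}\right)\ge g\!\left(\frac{s^{p+q}}{1+s^{p+q}}\right).$$
   Context: $F(a,b;c;x)$ is the Gaussian hypergeometric function $\sum_{n\ge0}\frac{(a)_n(b)_n}{(c)_n}\frac{x^n}{n!}$ ($|x|<1$), with $(a)_n=a(a+1)\cdots(a+n-1)$, $(a)_0=1$. *)

theory Defs
  imports "HOL-Analysis.Analysis"
begin

definition hyp2F1 :: "real \<Rightarrow> real \<Rightarrow> real \<Rightarrow> real \<Rightarrow> real" where
  "hyp2F1 a b c x = (\<Sum>n. pochhammer a n * pochhammer b n / pochhammer c n * x ^ n / fact n)"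

end

theory Submission
  imports Defs
begin

definition hc :: "real \<Rightarrow> real \<Rightarrow> nat \<Rightarrow> real" where
  "hc c d n = pochhammer c n * pochhammer d n / pochhammer (c+d) n / fact n"

definition rc :: "real \<Rightarrow> real \<Rightarrow> nat \<Rightarrow> real" where
  "rc c d n = real (Suc n) * hc c d n"

definition bc :: "real \<Rightarrow> real \<Rightarrow> nat \<Rightarrow> real" where
  "bc c d n = (case n of 0 \<Rightarrow> 0 | Suc m \<Rightarrow> hc c d m)"

definition Gs :: "real \<Rightarrow> real \<Rightarrow> real \<Rightarrow> real" where
  "Gs c d x = (\<Sum>n. bc c d n * x ^ n)"

definition Phi :: "real \<Rightarrow> real \<Rightarrow> real \<Rightarrow> real" where
  "Phi c d v = Gs c d (1 - exp (- v))"

definition Sr :: "real \<Rightarrow> real \<Rightarrow> real \<Rightarrow> real" where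
  "Sr c d t = (\<Sum>n. rc c d n * t ^ n)"

context
  fixes c d :: real
  assumes c: "c > 0" and d: "d > 0" and cd: "c * d \<le> 1"
begin

lemma hc_pos: "hc c d n > 0"
  using c d by (auto simp: hc_def intro!: divide_pos_pos mult_pos_pos pochhammer_pos)

lemma hc_Suc: "hc c d (Suc n) = hc c d n * ((c+n)*(d+n)/((c+d+n)*(n+1)))"
  by (simp add: hc_def pochhammer_Suc field_simps)

lemma rc_Suc_le: "rc c d (Suc n) \<le> rc c d n"
proof -
  have cd2: "2*c*d \<le> c + d"
  proof -
    have "(c+d)^2 = 4*(c*d) + (c-d)^2" by (simp add: power2_eq_square algebra_simps)
    then have "(c+d)^2 \<ge> 4*(c*d)" by simp
    moreover have "(c*d)*(c*d) \<le> (c*d)*1" using cd c d by (intro mult_left_mono) auto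
    moreover have "(2*c*d)^2 = 4*((c*d)*(c*d))" by (simp add: power2_eq_square algebra_simps)
    ultimately have "(2*c*d)^2 \<le> (c+d)^2" by linarith
    then show ?thesis by (rule power2_le_imp_le) (use c d in simp)
  qed
  have key: "(n+2)*((c+n)*(d+n)) \<le> (n+1)*(n+1)*(c+d+n)"
  proof -
    have "(n+2)*((c+n)*(d+n)) - (n+1)*(n+1)*(c+d+n) = (c*d-1)*n + (2*c*d - c - d)"
      by (simp add: algebra_simps)
    moreover have "(c*d-1)*n \<le> 0" using cd by (simp add: mult_nonpos_nonneg)
    ultimately show ?thesis using cd2 by linarith
  qed
  have pos: "(c+d+n)*(n+1) > 0" using c d by simp
  have "rc c d (Suc n) = hc c d n * ((n+2)*((c+n)*(d+n)) / ((c+d+n)*(n+1)))"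
    by (simp add: rc_def hc_Suc field_simps)
  also have "\<dots> \<le> hc c d n * ((n+1)*(n+1)*(c+d+n) / ((c+d+n)*(n+1)))"
    using hc_pos[of n] pos key by (intro mult_left_mono divide_right_mono) auto
  also have "\<dots> = rc c d n" using pos by (simp add: rc_def field_simps)
  finally show ?thesis .
qed

lemma rc_le1: "rc c d n \<le> 1"
proof (induction n)
  case 0 then show ?case by (simp add: rc_def hc_def)
next
  case (Suc n) then show ?case using rc_Suc_le[of n] by linarith
qed

lemma rc_pos: "rc c d n > 0" using hc_pos[of n] by (simp add: rc_def)

lemma hc_le1: "hc c d n \<le> 1"
proof -
  have "1 * hc c d n \<le> real (Suc n) * hc c d n" using hc_pos[of n] by (intro mult_right_mono) auto
  then show ?thesis using rc_le1[of n] unfolding rc_def by linarith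
qed


lemma summ_gen: fixes f :: "nat \<Rightarrow> real" and t :: real assumes "\<And>n. \<bar>f n\<bar> \<le> 1" "\<bar>t\<bar> < 1" shows "summable (\<lambda>n. f n * t ^ n)"
proof (rule summable_comparison_test'[of "\<lambda>n. \<bar>t\<bar>^n" 0])
  show "summable (\<lambda>n. \<bar>t\<bar> ^ n)" using assms(2) by (intro summable_geometric) auto
  fix n show "norm (f n * t ^ n) \<le> \<bar>t\<bar> ^ n"
    using assms(1)[of n] by (simp add: abs_mult power_abs mult_left_le_one_le)
qed

lemma summ_hc: "\<bar>t\<bar> < 1 \<Longrightarrow> summable (\<lambda>n. hc c d n * t ^ n)"
  by (rule summ_gen) (use hc_pos hc_le1 in \<open>auto simp: abs_le_iff less_imp_le\<close>)

lemma summ_rc: "\<bar>t\<bar> < 1 \<Longrightarrow> summable (\<lambda>n. rc c d n * t ^ n)"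
  by (rule summ_gen) (use rc_pos rc_le1 in \<open>auto simp: abs_le_iff less_imp_le\<close>)

lemma summ_bc: "\<bar>t\<bar> < 1 \<Longrightarrow> summable (\<lambda>n. bc c d n * t ^ n)"
  by (rule summ_gen) (use hc_pos hc_le1 in \<open>auto simp: abs_le_iff less_imp_le bc_def split: nat.splits\<close>)

lemma diffs_bc: "diffs (bc c d) = rc c d"
  by (rule ext) (simp add: diffs_def bc_def rc_def)

lemma Gs_eq: assumes "\<bar>t\<bar> < 1" shows "Gs c d t = t * hyp2F1 c d (c + d) t"
proof -
  have "(\<lambda>n. hc c d n * t ^ n) sums hyp2F1 c d (c + d) t"
  proof -
    have "(\<lambda>n. hc c d n * t ^ n) = (\<lambda>n. pochhammer c n * pochhammer d n / pochhammer (c+d) n * t ^ n / fact n)"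
      by (simp add: hc_def)
    then show ?thesis using summ_hc[OF assms] by (simp add: hyp2F1_def summable_sums)
  qed
  then have "(\<lambda>n. t * (hc c d n * t ^ n)) sums (t * hyp2F1 c d (c + d) t)" by (rule sums_mult)
  then have "(\<lambda>n. bc c d (Suc n) * t ^ (Suc n)) sums (t * hyp2F1 c d (c + d) t)"
    by (simp add: bc_def mult_ac)
  then have "(\<lambda>n. bc c d n * t ^ n) sums (t * hyp2F1 c d (c + d) t + bc c d 0 * t ^ 0)"
    by (subst (asm) sums_Suc_iff)
  then show ?thesis by (simp add: Gs_def bc_def sums_iff)
qed

lemma Gs_deriv: assumes "\<bar>t\<bar> < 1" shows "DERIV (Gs c d) t :> Sr c d t"
proof -
  have "DERIV (\<lambda>x. \<Sum>n. bc c d n * x^n) t :> (\<Sum>n. diffs (bc c d) n * t^n)"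
    by (rule termdiffs_strong[of _ "(1 + \<bar>t\<bar>)/2"]) (use assms in \<open>auto intro!: summ_bc\<close>)
  then show ?thesis by (simp add: diffs_bc Gs_def[abs_def] Sr_def)
qed

lemma Sr_nonneg: "\<bar>t\<bar> < 1 \<Longrightarrow> 0 \<le> t \<Longrightarrow> 0 \<le> Sr c d t"
  unfolding Sr_def using rc_pos by (intro suminf_nonneg summ_rc) (auto intro!: mult_nonneg_nonneg simp: less_imp_le)

definition dl :: "nat \<Rightarrow> real" where "dl n = rc c d n - (if n = 0 then 0 else rc c d (n - 1))"

lemma dl_sums: assumes "\<bar>t\<bar> < 1" shows "(\<lambda>n. dl n * t ^ n) sums ((1 - t) * Sr c d t)"
proof -
  have S: "(\<lambda>n. rc c d n * t ^ n) sums Sr c d t" using summ_rc[OF assms] by (simp add: Sr_def summable_sums)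
  define e where "e n = (if n = 0 then 0 else rc c d (n - 1) * t ^ n)" for n
  have "(\<lambda>n. t * (rc c d n * t ^ n)) sums (t * Sr c d t)" using S by (rule sums_mult)
  then have "(\<lambda>n. e (Suc n)) sums (t * Sr c d t)" by (simp add: e_def mult_ac)
  then have E: "e sums (t * Sr c d t)" by (subst (asm) sums_Suc_iff) (simp add: e_def)
  have "(\<lambda>n. rc c d n * t ^ n - e n) sums (Sr c d t - t * Sr c d t)" using S E by (rule sums_diff)
  moreover have "(\<lambda>n. rc c d n * t ^ n - e n) = (\<lambda>n. dl n * t ^ n)"
    by (rule ext) (simp add: e_def dl_def algebra_simps)
  ultimately show ?thesis by (simp add: algebra_simps)
qed

lemma phi_mono: assumes "0 \<le> s" "s \<le> t" "t < 1" shows "(1 - t) * Sr c d t \<le> (1 - s) * Sr c d s"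
proof (rule sums_le[OF _ dl_sums dl_sums])
  fix n
  show "dl n * t ^ n \<le> dl n * s ^ n"
  proof (cases n)
    case 0 then show ?thesis by simp
  next
    case (Suc m)
    have "dl n \<le> 0" using rc_Suc_le[of m] by (simp add: dl_def Suc)
    moreover have "s ^ n \<le> t ^ n" using assms by (intro power_mono) auto
    ultimately show ?thesis by (simp add: mult_left_mono_neg)
  qed
qed (use assms in auto)

lemma Phi_deriv: assumes "0 \<le> v" shows "DERIV (Phi c d) v :> (1 - (1 - exp (-v))) * Sr c d (1 - exp (-v))"
proof -
  have t: "\<bar>1 - exp (-v)\<bar> < 1" using assms by (auto simp: abs_if)
  have "((\<lambda>v. 1 - exp (-v)) has_real_derivative exp (-v)) (at v)"
    by (auto intro!: derivative_eq_intros)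
  from DERIV_chain2[OF Gs_deriv[OF t] this] show ?thesis
    by (simp add: Phi_def[abs_def] mult_ac)
qed

lemma Phi0: "Phi c d 0 = 0" by (simp add: Phi_def Gs_def bc_def)

lemma Phi_mono: assumes "0 \<le> a" "a \<le> b" shows "Phi c d a \<le> Phi c d b"
proof (rule DERIV_nonneg_imp_nondecreasing[OF assms(2)])
  fix x assume x: "a \<le> x" "x \<le> b"
  then have "0 \<le> x" using assms by linarith
  then show "\<exists>y. DERIV (Phi c d) x :> y \<and> y \<ge> 0"
    using Phi_deriv[of x] by (intro exI[of _ "(1 - (1 - exp (-x))) * Sr c d (1 - exp (-x))"] conjI)
      (auto intro!: mult_nonneg_nonneg Sr_nonneg simp: abs_if)
qed

lemma Phi_subadd: assumes "0 \<le> X" "0 \<le> Y" shows "Phi c d (X + Y) \<le> Phi c d X + Phi c d Y"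
proof -
  have "(\<lambda>u. Phi c d (u + Y) - Phi c d u) X \<le> (\<lambda>u. Phi c d (u + Y) - Phi c d u) 0"
  proof (rule DERIV_nonpos_imp_nonincreasing[OF assms(1)])
    fix x assume x: "0 \<le> x" "x \<le> X"
    have d1: "DERIV (\<lambda>u. Phi c d (u + Y)) x :> (1 - (1 - exp (-(x+Y)))) * Sr c d (1 - exp (-(x+Y)))"
    proof -
      have "((\<lambda>u. Phi c d (u + Y)) has_real_derivative ((1 - (1 - exp (-(x+Y)))) * Sr c d (1 - exp (-(x+Y)))) * 1) (at x)"
        by (rule DERIV_chain2[where f="Phi c d" and g="\<lambda>u. u + Y", OF Phi_deriv])
           (use x assms in \<open>auto intro!: derivative_eq_intros\<close>)
      then show ?thesis by simp
    qed
    have "(1 - (1 - exp (-(x+Y)))) * Sr c d (1 - exp (-(x+Y))) \<le> (1 - (1 - exp (-x))) * Sr c d (1 - exp (-x))"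
      using x assms by (intro phi_mono) auto
    then show "\<exists>y. DERIV (\<lambda>u. Phi c d (u + Y) - Phi c d u) x :> y \<and> y \<le> 0"
      using d1 Phi_deriv[of x] x
      by (intro exI[of _ "(1 - (1 - exp (-(x+Y)))) * Sr c d (1 - exp (-(x+Y))) - (1 - (1 - exp (-x))) * Sr c d (1 - exp (-x))"] conjI DERIV_diff) auto
  qed
  then show ?thesis by (simp add: Phi0)
qed


lemma Gs_Phi: assumes "0 < A" shows "Gs c d (A / (1 + A)) = Phi c d (ln (1 + A))"
proof -
  have "1 - exp (- ln (1 + A)) = A / (1 + A)" using assms
    by (simp add: exp_minus field_simps)
  then show ?thesis by (simp add: Phi_def)
qed

lemma main_ineq: assumes "0 < A" "0 < B"
  shows "Gs c d (A*B / (1 + A*B)) \<le> Gs c d (A / (1 + A)) + Gs c d (B / (1 + B))"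
proof -
  have AB: "0 < A*B" using assms by simp
  have "ln (1 + A*B) \<le> ln ((1+A)*(1+B))" using assms AB
    by (subst ln_le_cancel_iff) (auto simp: algebra_simps intro!: add_pos_pos)
  also have "\<dots> = ln (1+A) + ln (1+B)" using assms by (simp add: ln_mult)
  finally have le: "ln (1 + A*B) \<le> ln (1+A) + ln (1+B)" .
  have "Phi c d (ln (1 + A*B)) \<le> Phi c d (ln (1+A) + ln (1+B))"
    using le AB by (intro Phi_mono) auto
  also have "\<dots> \<le> Phi c d (ln (1+A)) + Phi c d (ln (1+B))"
    using assms by (intro Phi_subadd) auto
  finally show ?thesis using Gs_Phi assms AB by simp
qed

end

theorem mainTheorem10:
  fixes c d s p q :: real and g :: "real \<Rightarrow> real"
  assumes "c > 0" and "d > 0" and "c * d \<le> 1"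
    and "\<And>x. 0 < x \<Longrightarrow> x < 1 \<Longrightarrow> g x = x * hyp2F1 c d (c + d) x"
    and "s > 0" and "p > 0" and "q > 0"
  shows "g (s powr p / (1 + s powr p)) + g (s powr q / (1 + s powr q))
           \<ge> g (s powr (p + q) / (1 + s powr (p + q)))"
proof -
  have gG: "g (A / (1 + A)) = Gs c d (A / (1 + A))" if "A > 0" for A
  proof -
    have "0 < A / (1 + A)" "A / (1 + A) < 1" using that by auto
    moreover from calculation have "\<bar>A / (1 + A)\<bar> < 1" by (subst abs_of_pos) auto
    ultimately show ?thesis using assms(4) Gs_eq[OF assms(1-3)] by simp
  qed
  have A: "s powr p > 0" and B: "s powr q > 0" using assms by auto
  have "s powr (p + q) = s powr p * s powr q" by (simp add: powr_add)
  then show ?thesis using main_ineq[OF assms(1-3) A B] gG A B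
    by (simp add: mult_pos_pos)
qed

end
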